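(* Let $X,Y$ be non-empty subsets of $A^+$. (i) If $XY$ and $YX$ are prefix codes (resp. maximal prefix codes), then $X$ and $Y$ are prefix codes (resp. maximal prefix codes). (ii) If $XY$ and $YX$ are suffix codes (resp. maximal suffix codes), then $X$ and $Y$ are suffix codes (resp. maximal suffix codes). (iii) If $XY$ and $YX$ are bifix codes (resp. thin maximal bifix codes), then $X$ and $Y$ are bifix codes (resp. thin maximal bifix codes).
   Context: $A$ is a finite alphabet, $A^*$ the set of words, $A^+$ the non-empty words, $XY=\{xy:x\in X,y\in Y\}$. A prefix (suffix) code is a subset of $A^+$ in which no word is a proper prefix (suffix) of another; a bifix code is both. A prefix (suffix, bifix) code is maximal if it is not properly contained in another prefix (suffix, bifix) code over $A$. A set $X\subseteq A^*$ is thin if there is a word $w\in A^*$ that is not a factor (infix) of any word of $X$. *)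

theory Defs
  imports Main "HOL-Library.Sublist"
begin

definition plus_words :: "'a set \<Rightarrow> 'a list set" where
  "plus_words A = lists A - {[]}"

definition conc :: "'a list set \<Rightarrow> 'a list set \<Rightarrow> 'a list set" where
  "conc X Y = {x @ y | x y. x \<in> X \<and> y \<in> Y}"

definition prefix_code :: "'a set \<Rightarrow> 'a list set \<Rightarrow> bool" where
  "prefix_code A X \<longleftrightarrow> X \<subseteq> plus_words A \<and>
     (\<forall>x\<in>X. \<forall>y\<in>X. \<not> strict_prefix x y)"

definition suffix_code :: "'a set \<Rightarrow> 'a list set \<Rightarrow> bool" where
  "suffix_code A X \<longleftrightarrow> X \<subseteq> plus_words A \<and>
     (\<forall>x\<in>X. \<forall>y\<in>X. \<not> strict_suffix x y)"

definition bifix_code :: "'a set \<Rightarrow> 'a list set \<Rightarrow> bool" where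
  "bifix_code A X \<longleftrightarrow> prefix_code A X \<and> suffix_code A X"

definition maximal_prefix_code :: "'a set \<Rightarrow> 'a list set \<Rightarrow> bool" where
  "maximal_prefix_code A X \<longleftrightarrow> prefix_code A X \<and>
     (\<forall>Z. prefix_code A Z \<and> X \<subseteq> Z \<longrightarrow> Z = X)"

definition maximal_suffix_code :: "'a set \<Rightarrow> 'a list set \<Rightarrow> bool" where
  "maximal_suffix_code A X \<longleftrightarrow> suffix_code A X \<and>
     (\<forall>Z. suffix_code A Z \<and> X \<subseteq> Z \<longrightarrow> Z = X)"

definition maximal_bifix_code :: "'a set \<Rightarrow> 'a list set \<Rightarrow> bool" where
  "maximal_bifix_code A X \<longleftrightarrow> bifix_code A X \<and>
     (\<forall>Z. bifix_code A Z \<and> X \<subseteq> Z \<longrightarrow> Z = X)"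

definition thin :: "'a set \<Rightarrow> 'a list set \<Rightarrow> bool" where
  "thin A X \<longleftrightarrow> (\<exists>w\<in>lists A. \<forall>x\<in>X. \<not> sublist w x)"

end

theory Submission
  imports Defs
begin

lemma conc_plus:
  "X \<subseteq> plus_words A \<Longrightarrow> Y \<subseteq> plus_words A \<Longrightarrow> conc X Y \<subseteq> plus_words A"
  by (fastforce simp: conc_def plus_words_def subset_iff in_lists_conv_set)

lemma pc_eq: "prefix_code A X \<Longrightarrow> x \<in> X \<Longrightarrow> x' \<in> X \<Longrightarrow> prefix x x' \<Longrightarrow> x = x'"
  unfolding prefix_code_def strict_prefix_def by blast

lemma sc_eq: "suffix_code A X \<Longrightarrow> x \<in> X \<Longrightarrow> x' \<in> X \<Longrightarrow> suffix x x' \<Longrightarrow> x = x'"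
  unfolding suffix_code_def strict_suffix_def by blast

lemma pc_app: "prefix_code A X \<Longrightarrow> x \<in> X \<Longrightarrow> x' \<in> X \<Longrightarrow> x @ y = x' @ y' \<Longrightarrow> x = x'"
proof -
  assume a: "prefix_code A X" "x \<in> X" "x' \<in> X" "x @ y = x' @ y'"
  have "prefix x (x'@y')" "prefix x' (x'@y')" using a(4) by (metis prefixI)+
  then have "prefix x x' \<or> prefix x' x" using prefix_same_cases by blast
  then show ?thesis using a pc_eq by metis
qed

lemma sc_app: "suffix_code A X \<Longrightarrow> x \<in> X \<Longrightarrow> x' \<in> X \<Longrightarrow> y @ x = y' @ x' \<Longrightarrow> x = x'"
proof -
  assume a: "suffix_code A X" "x \<in> X" "x' \<in> X" "y @ x = y' @ x'"
  have "suffix x (y'@x')" "suffix x' (y'@x')" using a(4) by (metis suffixI)+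
  then have "suffix x x' \<or> suffix x' x" using suffix_same_cases by blast
  then show ?thesis using a sc_eq by metis
qed

lemma prefix_conc:
  assumes "prefix_code A X" "prefix_code A Y"
  shows "prefix_code A (conc X Y)"
  unfolding prefix_code_def
proof (intro conjI ballI)
  show "conc X Y \<subseteq> plus_words A" using assms conc_plus unfolding prefix_code_def by blast
  fix u v assume u: "u \<in> conc X Y" and v: "v \<in> conc X Y"
  obtain x y where xy: "u = x @ y" "x \<in> X" "y \<in> Y" using u by (auto simp: conc_def)
  obtain x' y' where xy': "v = x' @ y'" "x' \<in> X" "y' \<in> Y" using v by (auto simp: conc_def)
  show "\<not> strict_prefix u v"
  proof
    assume sp: "strict_prefix u v"
    then obtain w where w: "v = u @ w" "w \<noteq> []" by (auto simp: strict_prefix_def prefix_def)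
    have "x @ (y @ w) = x' @ y'" using w xy xy' by simp
    then have "x = x'" using pc_app[OF assms(1) xy(2) xy'(2)] by blast
    then have "y' = y @ w" using w xy xy' by simp
    then have "strict_prefix y y'" using w by (auto simp: strict_prefix_def)
    then show False using assms(2) xy(3) xy'(3) unfolding prefix_code_def by blast
  qed
qed

lemma suffix_conc:
  assumes "suffix_code A X" "suffix_code A Y"
  shows "suffix_code A (conc X Y)"
  unfolding suffix_code_def
proof (intro conjI ballI)
  show "conc X Y \<subseteq> plus_words A" using assms conc_plus unfolding suffix_code_def by blast
  fix u v assume u: "u \<in> conc X Y" and v: "v \<in> conc X Y"
  obtain x y where xy: "u = x @ y" "x \<in> X" "y \<in> Y" using u by (auto simp: conc_def)
  obtain x' y' where xy': "v = x' @ y'" "x' \<in> X" "y' \<in> Y" using v by (auto simp: conc_def)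
  show "\<not> strict_suffix u v"
  proof
    assume sp: "strict_suffix u v"
    then obtain w where w: "v = w @ u" "w \<noteq> []" by (auto simp: strict_suffix_def suffix_def)
    have "(w @ x) @ y = x' @ y'" using w xy xy' by simp
    then have "y = y'" using sc_app[OF assms(2) xy(3) xy'(3)] by blast
    then have "x' = w @ x" using w xy xy' by simp
    then have "strict_suffix x x'" using w by (auto simp: strict_suffix_def suffix_def)
    then show False using assms(1) xy(2) xy'(2) unfolding suffix_code_def by blast
  qed
qed

lemma pre_left:
  assumes "prefix_code A (conc Y X)" "Y \<noteq> {}" "X \<subseteq> plus_words A"
  shows "prefix_code A X"
  unfolding prefix_code_def
proof (intro conjI ballI)
  show "X \<subseteq> plus_words A" by fact
  fix x x' assume x: "x \<in> X" "x' \<in> X"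
  obtain y where y: "y \<in> Y" using assms(2) by blast
  show "\<not> strict_prefix x x'"
  proof
    assume "strict_prefix x x'"
    then have "strict_prefix (y@x) (y@x')" by (auto simp: strict_prefix_def)
    moreover have "y@x \<in> conc Y X" "y@x' \<in> conc Y X" using x y by (auto simp: conc_def)
    ultimately show False using assms(1) unfolding prefix_code_def by blast
  qed
qed

lemma suf_right:
  assumes "suffix_code A (conc X Y)" "Y \<noteq> {}" "X \<subseteq> plus_words A"
  shows "suffix_code A X"
  unfolding suffix_code_def
proof (intro conjI ballI)
  show "X \<subseteq> plus_words A" by fact
  fix x x' assume x: "x \<in> X" "x' \<in> X"
  obtain y where y: "y \<in> Y" using assms(2) by blast
  show "\<not> strict_suffix x x'"
  proof
    assume "strict_suffix x x'"
    then have "strict_suffix (x@y) (x'@y)" by (auto simp: strict_suffix_def suffix_def)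
    moreover have "x@y \<in> conc X Y" "x'@y \<in> conc X Y" using x y by (auto simp: conc_def)
    ultimately show False using assms(1) unfolding suffix_code_def by blast
  qed
qed

lemma conc_mono: "X \<subseteq> Z \<Longrightarrow> conc X Y \<subseteq> conc Z Y" "X \<subseteq> Z \<Longrightarrow> conc Y X \<subseteq> conc Y Z"
  by (auto simp: conc_def)

lemma maxpre:
  assumes "maximal_prefix_code A (conc X Y)" "prefix_code A X" "prefix_code A Y" "Y \<noteq> {}"
  shows "maximal_prefix_code A X"
  unfolding maximal_prefix_code_def
proof (intro conjI allI impI)
  show "prefix_code A X" by fact
  fix Z assume Z: "prefix_code A Z \<and> X \<subseteq> Z"
  have "prefix_code A (conc Z Y)" using prefix_conc Z assms(3) by blast
  moreover have "conc X Y \<subseteq> conc Z Y" using Z conc_mono by blast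
  ultimately have eq: "conc Z Y = conc X Y" using assms(1) unfolding maximal_prefix_code_def by blast
  show "Z = X"
  proof
    show "Z \<subseteq> X"
    proof
      fix z assume z: "z \<in> Z"
      obtain y where y: "y \<in> Y" using assms(4) by blast
      have "z @ y \<in> conc Z Y" using z y by (auto simp: conc_def)
      then have "z @ y \<in> conc X Y" using eq by simp
      then obtain x y' where "z @ y = x @ y'" "x \<in> X" by (auto simp: conc_def)
      then have "z = x" using pc_app[of A Z z x y y'] Z z by blast
      then show "z \<in> X" using \<open>x \<in> X\<close> by simp
    qed
  qed (use Z in blast)
qed

lemma maxsuf:
  assumes "maximal_suffix_code A (conc Y X)" "suffix_code A X" "suffix_code A Y" "Y \<noteq> {}"
  shows "maximal_suffix_code A X"
  unfolding maximal_suffix_code_def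
proof (intro conjI allI impI)
  show "suffix_code A X" by fact
  fix Z assume Z: "suffix_code A Z \<and> X \<subseteq> Z"
  have "suffix_code A (conc Y Z)" using suffix_conc Z assms(3) by blast
  moreover have "conc Y X \<subseteq> conc Y Z" using Z conc_mono by blast
  ultimately have eq: "conc Y Z = conc Y X" using assms(1) unfolding maximal_suffix_code_def by blast
  show "Z = X"
  proof
    show "Z \<subseteq> X"
    proof
      fix z assume z: "z \<in> Z"
      obtain y where y: "y \<in> Y" using assms(4) by blast
      have "y @ z \<in> conc Y Z" using z y by (auto simp: conc_def)
      then have "y @ z \<in> conc Y X" using eq by simp
      then obtain x y' where "y @ z = y' @ x" "x \<in> X" by (auto simp: conc_def)
      then have "z = x" using sc_app[of A Z z x y y'] Z z by blast
      then show "z \<in> X" using \<open>x \<in> X\<close> by simp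
    qed
  qed (use Z in blast)
qed

lemma maxbif:
  assumes "maximal_bifix_code A (conc X Y)" "bifix_code A X" "bifix_code A Y" "Y \<noteq> {}"
  shows "maximal_bifix_code A X"
  unfolding maximal_bifix_code_def
proof (intro conjI allI impI)
  show "bifix_code A X" by fact
  fix Z assume Z: "bifix_code A Z \<and> X \<subseteq> Z"
  have "bifix_code A (conc Z Y)" using prefix_conc suffix_conc Z assms(3) unfolding bifix_code_def by blast
  moreover have "conc X Y \<subseteq> conc Z Y" using Z conc_mono by blast
  ultimately have eq: "conc Z Y = conc X Y" using assms(1) unfolding maximal_bifix_code_def by blast
  show "Z = X"
  proof
    show "Z \<subseteq> X"
    proof
      fix z assume z: "z \<in> Z"
      obtain y where y: "y \<in> Y" using assms(4) by blast
      have "z @ y \<in> conc Z Y" using z y by (auto simp: conc_def)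
      then have "z @ y \<in> conc X Y" using eq by simp
      then obtain x y' where "z @ y = x @ y'" "x \<in> X" by (auto simp: conc_def)
      then have "z = x" using pc_app[of A Z z x y y'] Z z unfolding bifix_code_def by blast
      then show "z \<in> X" using \<open>x \<in> X\<close> by simp
    qed
  qed (use Z in blast)
qed

lemma thin_left:
  assumes "thin A (conc X Y)" "Y \<noteq> {}"
  shows "thin A X"
proof -
  obtain w where w: "w \<in> lists A" "\<forall>u\<in>conc X Y. \<not> sublist w u" using assms(1) unfolding thin_def by blast
  obtain y where y: "y \<in> Y" using assms(2) by blast
  have "\<forall>x\<in>X. \<not> sublist w x"
  proof (intro ballI notI)
    fix x assume "x \<in> X" "sublist w x"
    then have "sublist w (x @ y)" by (meson sublist_append_rightI sublist_order.order.trans)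
    moreover have "x @ y \<in> conc X Y" using \<open>x \<in> X\<close> y by (auto simp: conc_def)
    ultimately show False using w by blast
  qed
  then show ?thesis using w unfolding thin_def by blast
qed

theorem propositionP:
  fixes A :: "'a set" and X Y :: "'a list set"
  assumes "finite A"
    and "X \<subseteq> plus_words A" and "Y \<subseteq> plus_words A"
    and "X \<noteq> {}" and "Y \<noteq> {}"
  shows "(prefix_code A (conc X Y) \<and> prefix_code A (conc Y X)
            \<longrightarrow> prefix_code A X \<and> prefix_code A Y)
       \<and> (maximal_prefix_code A (conc X Y) \<and> maximal_prefix_code A (conc Y X)
            \<longrightarrow> maximal_prefix_code A X \<and> maximal_prefix_code A Y)
       \<and> (suffix_code A (conc X Y) \<and> suffix_code A (conc Y X)
            \<longrightarrow> suffix_code A X \<and> suffix_code A Y)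
       \<and> (maximal_suffix_code A (conc X Y) \<and> maximal_suffix_code A (conc Y X)
            \<longrightarrow> maximal_suffix_code A X \<and> maximal_suffix_code A Y)
       \<and> (bifix_code A (conc X Y) \<and> bifix_code A (conc Y X)
            \<longrightarrow> bifix_code A X \<and> bifix_code A Y)
       \<and> (thin A (conc X Y) \<and> maximal_bifix_code A (conc X Y)
            \<and> thin A (conc Y X) \<and> maximal_bifix_code A (conc Y X)
            \<longrightarrow> thin A X \<and> maximal_bifix_code A X \<and> thin A Y \<and> maximal_bifix_code A Y)"
proof -
  have P: "prefix_code A (conc X Y) \<and> prefix_code A (conc Y X)
            \<longrightarrow> prefix_code A X \<and> prefix_code A Y"
    using pre_left assms by blast
  have S: "suffix_code A (conc X Y) \<and> suffix_code A (conc Y X)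
            \<longrightarrow> suffix_code A X \<and> suffix_code A Y"
    using suf_right assms by blast
  have B: "bifix_code A (conc X Y) \<and> bifix_code A (conc Y X)
            \<longrightarrow> bifix_code A X \<and> bifix_code A Y"
    using P S unfolding bifix_code_def by blast
  have MP: "maximal_prefix_code A (conc X Y) \<and> maximal_prefix_code A (conc Y X)
            \<longrightarrow> maximal_prefix_code A X \<and> maximal_prefix_code A Y"
  proof
    assume h: "maximal_prefix_code A (conc X Y) \<and> maximal_prefix_code A (conc Y X)"
    then have "prefix_code A X \<and> prefix_code A Y" using P unfolding maximal_prefix_code_def by blast
    then show "maximal_prefix_code A X \<and> maximal_prefix_code A Y"
      using h maxpre[of A X Y] maxpre[of A Y X] assms(4,5) by blast
  qed
  have MS: "maximal_suffix_code A (conc X Y) \<and> maximal_suffix_code A (conc Y X)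
            \<longrightarrow> maximal_suffix_code A X \<and> maximal_suffix_code A Y"
  proof
    assume h: "maximal_suffix_code A (conc X Y) \<and> maximal_suffix_code A (conc Y X)"
    then have "suffix_code A X \<and> suffix_code A Y" using S unfolding maximal_suffix_code_def by blast
    then show "maximal_suffix_code A X \<and> maximal_suffix_code A Y"
      using h maxsuf[of A Y X] maxsuf[of A X Y] assms(4,5) by blast
  qed
  have MB: "thin A (conc X Y) \<and> maximal_bifix_code A (conc X Y)
            \<and> thin A (conc Y X) \<and> maximal_bifix_code A (conc Y X)
            \<longrightarrow> thin A X \<and> maximal_bifix_code A X \<and> thin A Y \<and> maximal_bifix_code A Y"
  proof
    assume h: "thin A (conc X Y) \<and> maximal_bifix_code A (conc X Y)
            \<and> thin A (conc Y X) \<and> maximal_bifix_code A (conc Y X)"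
    then have b: "bifix_code A X \<and> bifix_code A Y" using B unfolding maximal_bifix_code_def by blast
    have "thin A X" "thin A Y" using h thin_left assms(4,5) by blast+
    moreover have "maximal_bifix_code A X" "maximal_bifix_code A Y"
      using h b maxbif[of A X Y] maxbif[of A Y X] assms(4,5) by blast+
    ultimately show "thin A X \<and> maximal_bifix_code A X \<and> thin A Y \<and> maximal_bifix_code A Y" by blast
  qed
  show ?thesis using P S B MP MS MB by blast
qed

end
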